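(* Let $(t_1,s_1),(t_2,s_2)\in\mathbb{C}^\times\times\mathbb{C}^\times$ with $t_1\ne t_2$ and $s_1\neq s_2$, let $X_1=A_2(t_1,s_1)$, $X_2=A_2(t_2,s_2)$, let $\varepsilon_0=\det(X_1)+\det(X_2)-\det(X_1+X_2)$, and let $f_n(z)=\sum_{k=0}^{\lfloor n/2\rfloor}(-1)^k\frac{n}{n-k}\binom{n-k}{k}z^{n-2k}$. Then for all $n\in\mathbb{N}$, $\bigl((X_1X_2)^n\bigr)^{-1}=f_n(\varepsilon_0)I_2-(X_1X_2)^n$ and $\bigl((X_2X_1)^n\bigr)^{-1}=f_n(\varepsilon_0)I_2-(X_2X_1)^n$.
   Context: $\mathbb{C}^\times=\mathbb{C}\setminus\{0\}$; $A_2(t,s)=\begin{pmatrix} t & s\\ \frac{1-t^2}{s} & -t\end{pmatrix}$; $I_2$ is the $2\times2$ identity matrix. *)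

theory Defs
  imports "HOL-Analysis.Analysis"
begin

definition A2 :: "complex \<Rightarrow> complex \<Rightarrow> complex^2^2" where
  "A2 t s = (\<chi> i j. if i = 1 then (if j = 1 then t else s)
                      else (if j = 1 then (1 - t^2) / s else - t))"

text \<open>Matrix power with respect to matrix multiplication (the operator ^ on vec types
  is componentwise, so we define the matrix power explicitly).\<close>
definition matpow :: "'a::semiring_1^'n^'n \<Rightarrow> nat \<Rightarrow> 'a^'n^'n" where
  "matpow A n = (((**) A) ^^ n) (mat 1)"

definition f_poly :: "nat \<Rightarrow> complex \<Rightarrow> complex" where
  "f_poly n z = (\<Sum>k = 0..n div 2. (-1)^k * (of_nat n / of_nat (n - k))
                   * of_nat ((n - k) choose k) * z ^ (n - 2 * k))"

end

theory Submission
  imports Defs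
begin

lemma matrix_inv_eq:
  fixes A B :: "'a::comm_ring_1^'n^'n"
  assumes "A ** B = mat 1" "B ** A = mat 1"
  shows "matrix_inv A = B"
proof -
  have "\<exists>A'. A ** A' = mat 1 \<and> A' ** A = mat 1" using assms by blast
  then have h: "A ** matrix_inv A = mat 1 \<and> matrix_inv A ** A = mat 1"
    unfolding matrix_inv_def by (rule someI_ex)
  have "matrix_inv A = matrix_inv A ** (A ** B)" using assms by simp
  also have "\<dots> = (matrix_inv A ** A) ** B" by (simp add: matrix_mul_assoc)
  also have "\<dots> = B" using h by simp
  finally show ?thesis .
qed



lemma ch2:
  fixes B :: "complex^2^2"
  shows "B ** B = mat (trace B) ** B - mat (det B)"
  by (simp add: vec_eq_iff forall_2 matrix_matrix_mult_def sum_2 det_2 trace_def mat_def algebra_simps)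

lemma inv2:
  fixes B :: "complex^2^2"
  assumes "det B = 1"
  shows "matrix_inv B = mat (trace B) - B"
proof (rule matrix_inv_eq)
  show "B ** (mat (trace B) - B) = mat 1"
    using assms by (simp add: vec_eq_iff forall_2 matrix_matrix_mult_def sum_2 det_2 trace_def mat_def algebra_simps)
  show "(mat (trace B) - B) ** B = mat 1"
    using assms by (simp add: vec_eq_iff forall_2 matrix_matrix_mult_def sum_2 det_2 trace_def mat_def algebra_simps)
qed

lemma matpow_Suc: "matpow A (Suc n) = A ** matpow A n"
  by (simp add: matpow_def)
lemma matpow_0: "matpow A 0 = mat 1"
  by (simp add: matpow_def)

lemma det_matpow: "det (matpow (A::complex^'n^'n) n) = det A ^ n"
  by (induction n) (simp_all add: matpow_Suc matpow_0 det_mul det_I)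

lemma msub_r: "((A::'a::comm_ring_1^'n^'m) - B) ** C = A ** C - B ** C"
  by (simp add: vec_eq_iff matrix_matrix_mult_def sum_subtractf algebra_simps)

lemma trace_rec:
  fixes M :: "complex^2^2"
  assumes "det M = 1"
  shows "trace (matpow M (Suc (Suc n))) = trace M * trace (matpow M (Suc n)) - trace (matpow M n)"
proof -
  have "matpow M (Suc (Suc n)) = (M ** M) ** matpow M n" by (simp add: matpow_Suc matrix_mul_assoc)
  also have "\<dots> = (mat (trace M) ** M - mat 1) ** matpow M n" using assms by (simp add: ch2)
  also have "\<dots> = mat (trace M) ** matpow M (Suc n) - matpow M n"
    by (simp add: msub_r matpow_Suc matrix_mul_assoc)
  finally have e: "matpow M (Suc (Suc n)) = mat (trace M) ** matpow M (Suc n) - matpow M n" .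
  have tm: "\<And>c (X::complex^2^2). trace (mat c ** X) = c * trace X"
    by (simp add: trace_def matrix_matrix_mult_def sum_2 mat_def algebra_simps)
  show ?thesis unfolding e trace_sub tm ..
qed


definition Lc :: "nat \<Rightarrow> nat \<Rightarrow> nat" where
  "Lc n k = ((n - k) choose k) + (if k = 0 then 0 else ((n - k - 1) choose (k - 1)))"

lemma Lc_pascal:
  assumes "n \<ge> 2"
  shows "Lc (Suc (Suc n)) k = Lc (Suc n) k + (if k = 0 then 0 else Lc n (k - 1))"
proof (cases k)
  case 0 then show ?thesis by (simp add: Lc_def)
next
  case (Suc j)
  consider "j < n" | "j = n" | "j > n" by linarith
  then show ?thesis
  proof cases
    case 1
    then obtain m where m: "n - j = Suc m" by (metis Suc_diff_Suc)
    have e1: "Suc (Suc n) - Suc j = Suc (Suc m)" using m 1 by simp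
    have e2: "Suc n - Suc j = Suc m" using m 1 by simp
    have e3: "n - j = Suc m" by (rule m)
    show ?thesis unfolding Lc_def Suc using e1 e2 e3
      by (cases j) (simp_all add: binomial_Suc_Suc)
  next
    case 2 then show ?thesis using assms unfolding Lc_def Suc
      by (cases n) (auto simp: binomial_eq_0)
  next
    case 3 then show ?thesis using assms unfolding Lc_def Suc by (auto simp: binomial_eq_0)
  qed
qed

lemma Lc_zero: "n \<ge> 2 \<Longrightarrow> k > n div 2 \<Longrightarrow> Lc n k = 0"
  unfolding Lc_def by (auto simp: binomial_eq_0)

lemma Lc_coef:
  assumes "n \<ge> 1" "k \<le> n div 2"
  shows "(of_nat n / of_nat (n - k) * of_nat ((n - k) choose k) :: complex) = of_nat (Lc n k)"
proof (cases "k = 0")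
  case True then show ?thesis using assms by (simp add: Lc_def)
next
  case False
  define m where "m = n - k"
  have km: "k < n" "m \<ge> 1" "n = m + k" using assms False unfolding m_def by auto
  have t: "k * (m choose k) = m * ((m - 1) choose (k - 1))"
    using times_binomial_minus1_eq False by auto
  have "n * (m choose k) = m * Lc n k"
    using t km False unfolding Lc_def m_def[symmetric] by (simp add: algebra_simps)
  then have "(of_nat n * of_nat (m choose k) :: complex) = of_nat m * of_nat (Lc n k)"
    by (metis of_nat_mult)
  then show ?thesis using km unfolding m_def[symmetric] by (simp add: field_simps)
qed

definition g :: "nat \<Rightarrow> complex \<Rightarrow> nat \<Rightarrow> complex" where
  "g n z N = (\<Sum>k<N. (-1)^k * of_nat (Lc n k) * z ^ (n - 2 * k))"

lemma f_g:
  assumes "n \<ge> 2" "N > n div 2"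
  shows "f_poly n z = g n z N"
proof -
  have "f_poly n z = (\<Sum>k<Suc (n div 2). (-1)^k * of_nat (Lc n k) * z ^ (n - 2 * k))"
    unfolding f_poly_def atLeast0AtMost lessThan_Suc_atMost
  proof (intro sum.cong refl)
    fix k assume "k \<in> {..n div 2}"
    then have "(of_nat n / of_nat (n - k) * of_nat ((n - k) choose k) :: complex) = of_nat (Lc n k)"
      using assms by (intro Lc_coef) auto
    then show "(-1)^k * (of_nat n / of_nat (n - k)) * of_nat ((n - k) choose k) * z ^ (n - 2 * k)
       = (-1)^k * of_nat (Lc n k) * z ^ (n - 2 * k)" by (metis mult.assoc)
  qed
  also have "\<dots> = g n z N" unfolding g_def
    using assms by (intro sum.mono_neutral_left) (auto simp: Lc_zero)
  finally show ?thesis .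
qed

lemma f_rec2:
  assumes "n \<ge> 2"
  shows "f_poly (Suc (Suc n)) z = z * f_poly (Suc n) z - f_poly n z"
proof -
  define N where "N = n + 2"
  have a: "f_poly (Suc (Suc n)) z = g (Suc (Suc n)) z N"
       "f_poly (Suc n) z = g (Suc n) z N"
       "f_poly n z = g n z (N - 1)"
    using assms unfolding N_def by (auto intro!: f_g)
  have "g (Suc (Suc n)) z N = (\<Sum>k<N. (-1)^k * of_nat (Lc (Suc n) k) * z ^ (Suc (Suc n) - 2 * k))
      + (\<Sum>k<N. (if k = 0 then 0 else (-1)^k * of_nat (Lc n (k - 1)) * z ^ (Suc (Suc n) - 2 * k)))"
    unfolding g_def Lc_pascal[OF assms] sum.distrib[symmetric]
    by (intro sum.cong) (auto simp: algebra_simps)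
  also have "(\<Sum>k<N. (-1)^k * of_nat (Lc (Suc n) k) * z ^ (Suc (Suc n) - 2 * k)) = z * g (Suc n) z N"
    unfolding g_def sum_distrib_left
  proof (intro sum.cong refl)
    fix k
    show "(-1)^k * of_nat (Lc (Suc n) k) * z ^ (Suc (Suc n) - 2 * k) =
          z * ((-1)^k * of_nat (Lc (Suc n) k) * z ^ (Suc n - 2 * k))"
    proof (cases "k > Suc n div 2")
      case True then show ?thesis using assms by (simp add: Lc_zero)
    next
      case False
      then have "Suc (Suc n) - 2 * k = Suc (Suc n - 2 * k)" by auto
      then show ?thesis by simp
    qed
  qed
  also have "(\<Sum>k<N. (if k = 0 then 0 else (-1)^k * of_nat (Lc n (k - 1)) * z ^ (Suc (Suc n) - 2 * k)))
       = - g n z (N - 1)"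
  proof -
    have "N = Suc (N - 1)" unfolding N_def by simp
    then have "(\<Sum>k<N. (if k = 0 then 0 else (-1)^k * of_nat (Lc n (k - 1)) * z ^ (Suc (Suc n) - 2 * k)))
       = (\<Sum>k<Suc (N - 1). (if k = 0 then 0 else (-1)^k * of_nat (Lc n (k - 1)) * z ^ (Suc (Suc n) - 2 * k)))"
      by simp
    also have "\<dots> = (\<Sum>j<N - 1. (-1)^(Suc j) * of_nat (Lc n j) * z ^ (Suc (Suc n) - 2 * Suc j))"
      by (subst sum.lessThan_Suc_shift) simp
    also have "\<dots> = - g n z (N - 1)"
      unfolding g_def sum_negf[symmetric] by (intro sum.cong) auto
    finally show ?thesis .
  qed
  finally show ?thesis using a by simp
qed

lemma f1: "f_poly 1 z = z" by (simp add: f_poly_def)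
lemma f2: "f_poly 2 z = z^2 - 2" by (simp add: f_poly_def numeral_eq_Suc)
lemma f3: "f_poly 3 z = z^3 - 3 * z"
proof -
  have "{0..(3::nat) div 2} = {0,1}" by auto
  then show ?thesis by (simp add: f_poly_def)
qed

lemma f_rec:
  assumes "n \<ge> 1"
  shows "f_poly (Suc (Suc n)) z = z * f_poly (Suc n) z - f_poly n z"
proof (cases "n = 1")
  case True
  then have e: "Suc (Suc n) = 3" "Suc n = 2" "n = 1" by auto
  have a: "f_poly (Suc (Suc n)) z = z^3 - 3 * z" using f3 by (simp only: e(1))
  have b: "f_poly (Suc n) z = z^2 - 2" using f2 by (simp only: e(2))
  have c: "f_poly n z = z" using f1 by (simp only: e(3))
  show ?thesis unfolding a b c
    by (simp add: algebra_simps power2_eq_square power3_eq_cube)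
next
  case False then show ?thesis using assms f_rec2 by auto
qed


lemma det_A2: "s \<noteq> 0 \<Longrightarrow> det (A2 t s) = -1"
  by (simp add: det_2 A2_def field_simps power2_eq_square)

lemma eps_trace:
  assumes "s1 \<noteq> 0" "s2 \<noteq> 0"
  shows "det (A2 t1 s1) + det (A2 t2 s2) - det (A2 t1 s1 + A2 t2 s2) = trace (A2 t1 s1 ** A2 t2 s2)"
  using assms
  by (simp add: det_2 A2_def trace_def matrix_matrix_mult_def sum_2 field_simps)

lemma trace_pow:
  fixes M :: "complex^2^2"
  assumes "det M = 1" "n \<ge> 1"
  shows "trace (matpow M n) = f_poly n (trace M)"
proof -
  have "trace (matpow M n) = f_poly n (trace M) \<and> trace (matpow M (Suc n)) = f_poly (Suc n) (trace M)"
    using assms(2)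
  proof (induction n rule: dec_induct)
    case base
    have t1: "trace (matpow M 1) = trace M" by (simp add: matpow_Suc matpow_0)
    have "trace (matpow M (Suc (Suc 0))) = trace M * trace (matpow M (Suc 0)) - trace (matpow M 0)"
      by (rule trace_rec[OF assms(1)])
    then have "trace (matpow M 2) = trace M ^ 2 - 2"
      by (simp add: matpow_Suc matpow_0 trace_I numeral_eq_Suc power2_eq_square)
    then show ?case using t1 f1 f2 by (simp add: numeral_2_eq_2)
  next
    case (step m)
    then show ?case using trace_rec[OF assms(1), of m] f_rec[of m] by simp
  qed
  then show ?thesis by simp
qed

theorem mainTheorem11:
  fixes t1 s1 t2 s2 :: complex and n :: nat
  assumes "t1 \<noteq> 0" "s1 \<noteq> 0" "t2 \<noteq> 0" "s2 \<noteq> 0"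
    and "t1 \<noteq> t2" "s1 \<noteq> s2"
    and "n \<ge> 1"
  shows "let X1 = A2 t1 s1; X2 = A2 t2 s2;
             \<epsilon>0 = det X1 + det X2 - det (X1 + X2)
         in matrix_inv (matpow (X1 ** X2) n) = mat (f_poly n \<epsilon>0) - matpow (X1 ** X2) n
          \<and> matrix_inv (matpow (X2 ** X1) n) = mat (f_poly n \<epsilon>0) - matpow (X2 ** X1) n"
proof -
  define X1 where "X1 = A2 t1 s1"
  define X2 where "X2 = A2 t2 s2"
  have e: "det X1 + det X2 - det (X1 + X2) = trace (X1 ** X2)"
    unfolding X1_def X2_def using assms(2,4) by (rule eps_trace)
  have d1: "det (X1 ** X2) = 1" "det (X2 ** X1) = 1"
    unfolding X1_def X2_def using assms by (simp_all add: det_mul det_A2)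
  have ts: "trace (X2 ** X1) = trace (X1 ** X2)" by (rule trace_mul_sym)
  have "matrix_inv (matpow M n) = mat (f_poly n (trace M)) - matpow M n" if "det M = 1" for M :: "complex^2^2"
  proof -
    have "det (matpow M n) = 1" using that by (simp add: det_matpow)
    then show ?thesis using inv2 trace_pow[OF that assms(7)] by simp
  qed
  from this[OF d1(1)] this[OF d1(2)] show ?thesis
    unfolding Let_def X1_def[symmetric] X2_def[symmetric] e ts by simp
qed

end
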